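(* Let $G$ be the final graph of the uncoordinated construction (described in the context) on a finite point set $P\subset\mathbb{R}^d$ with parameter $s>1$, with each edge weighted by its Euclidean length. Then $G$ is a spanner with stretch factor $(s+1)/(s-1)$: for all $p,q\in P$, the shortest path length between $p$ and $q$ in $G$ is at most $\frac{s+1}{s-1}|pq|$.
   Context: Fix $d\ge 1$. Let $P\subset\mathbb{R}^d$ be a finite set of $n\ge 2$ points, $|xy|$ the Euclidean distance, $s>1$. Uncoordinated construction: start with the graph $G$ on vertex set $P$ with no edges. Every ordered pair $(p,q)$ of distinct points of $P$ is processed exactly once, in an arbitrary order, one at a time. When $(p,q)$ is processed, the edge $pq$ is added to $G$ unless $G$ currently contains an edge whose endpoints can be labeled $p',q'$ with $|pp'|\le |p'q'|/(2s+2)$ and $|qq'|\le |p'q'|/(2s+2)$. $G$ is the graph after all pairs are processed. (Equivalently, $G$ consists of the edges $pq$ for the pairs $(p,q)$ selected by the greedy $s$-WSPD algorithm: repeatedly choose an arbitrary pair of points not yet covered, add $(B_r(p),B_r(q))$ with $r=|pq|/(2s+2)$ and $B_r(x)=\{y\in P:|xy|\le r\}$, and mark all pairs $(x,y)$ with $x\in B_r(p)$, $y\in B_r(q)$ as covered.) *)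

theory Defs
  imports "HOL-Analysis.Analysis"
begin

text \<open>An edge is stored as an ordered pair; the graph is undirected.
  The test "G contains an edge whose endpoints can be labeled p', q' with
  |pp'| <= |p'q'|/(2s+2) and |qq'| <= |p'q'|/(2s+2)".\<close>
definition covered :: "real \<Rightarrow> ('a::euclidean_space \<times> 'a) set \<Rightarrow> 'a \<Rightarrow> 'a \<Rightarrow> bool" where
  "covered s E p q \<longleftrightarrow>
     (\<exists>(a, b) \<in> E.
        (dist p a \<le> dist a b / (2 * s + 2) \<and> dist q b \<le> dist a b / (2 * s + 2)) \<or>
        (dist p b \<le> dist a b / (2 * s + 2) \<and> dist q a \<le> dist a b / (2 * s + 2)))"

definition process_pair :: "real \<Rightarrow> ('a::euclidean_space \<times> 'a) set \<Rightarrow> 'a \<times> 'a \<Rightarrow> ('a \<times> 'a) set" where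
  "process_pair s E pq = (if covered s E (fst pq) (snd pq) then E else insert pq E)"

definition uncoord_graph :: "real \<Rightarrow> ('a::euclidean_space \<times> 'a) list \<Rightarrow> ('a \<times> 'a) set" where
  "uncoord_graph s ord_list = foldl (process_pair s) {} ord_list"

definition adjacent :: "('a \<times> 'a) set \<Rightarrow> 'a \<Rightarrow> 'a \<Rightarrow> bool" where
  "adjacent E x y \<longleftrightarrow> (x, y) \<in> E \<or> (y, x) \<in> E"

definition is_path :: "('a \<times> 'a) set \<Rightarrow> 'a list \<Rightarrow> 'a \<Rightarrow> 'a \<Rightarrow> bool" where
  "is_path E xs p q \<longleftrightarrow> xs \<noteq> [] \<and> hd xs = p \<and> last xs = q \<and>
     (\<forall>i < length xs - 1. adjacent E (xs ! i) (xs ! Suc i))"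

definition path_length :: "'a::metric_space list \<Rightarrow> real" where
  "path_length xs = (\<Sum>i < length xs - 1. dist (xs ! i) (xs ! Suc i))"

definition graph_dist :: "('a::metric_space \<times> 'a) set \<Rightarrow> 'a \<Rightarrow> 'a \<Rightarrow> real" where
  "graph_dist E p q = Inf (path_length ` {xs. is_path E xs p q})"

end

theory Submission
  imports Defs
begin

lemma pl_single: "path_length [x] = 0"
  by (simp add: path_length_def)

lemma pl_cons: "path_length (x#y#zs) = dist x y + path_length (y#zs)"
  unfolding path_length_def
  by (simp add: sum.lessThan_Suc_shift del: sum.lessThan_Suc)

lemma ip_single: "is_path E [x] p q \<longleftrightarrow> x = p \<and> x = q"
  by (auto simp: is_path_def)

lemma ip_cons: "is_path E (x#y#zs) p q \<longleftrightarrow> x = p \<and> adjacent E x y \<and> is_path E (y#zs) y q"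
  unfolding is_path_def
  by (auto simp: less_Suc_eq_0_disj nth_Cons split: nat.splits)

lemma pl_nonneg: "path_length xs \<ge> 0"
  unfolding path_length_def by (simp add: sum_nonneg)

lemma pl_append: "xs \<noteq> [] \<Longrightarrow> ys \<noteq> [] \<Longrightarrow>
   path_length (xs @ ys) = path_length xs + dist (last xs) (hd ys) + path_length ys"
proof (induction xs rule: list_nonempty_induct)
  case (single x)
  then obtain y ys' where "ys = y # ys'" by (cases ys) auto
  then show ?case by (simp add: pl_cons pl_single)
next
  case (cons x xs)
  then obtain y xs' where "xs = y # xs'" by (cases xs) auto
  then show ?case using cons by (simp add: pl_cons)
qed

lemma ip_append: "xs \<noteq> [] \<Longrightarrow> is_path E xs p a \<Longrightarrow> adjacent E a b \<Longrightarrow> is_path E ys b q \<Longrightarrow>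
   is_path E (xs @ ys) p q"
proof (induction xs arbitrary: p rule: list_nonempty_induct)
  case (single x)
  then have "ys \<noteq> []" by (auto simp: is_path_def)
  then obtain y ys' where "ys = y # ys'" by (cases ys) auto
  moreover have "y = b" using single \<open>ys = y # ys'\<close> by (simp add: is_path_def)
  ultimately have "is_path E (x # y # ys') p q" using single by (auto simp: ip_cons ip_single)
  then show ?case using \<open>ys = y # ys'\<close> by simp
next
  case (cons x xs)
  then obtain y xs' where "xs = y # xs'" by (cases xs) auto
  then show ?case using cons by (auto simp: ip_cons)
qed

lemma covered_mono: "covered s E p q \<Longrightarrow> E \<subseteq> F \<Longrightarrow> covered s F p q"
  unfolding covered_def by blast

lemma covered_self: "s > 1 \<Longrightarrow> covered s (insert (p,q) E) p q"
  unfolding covered_def by (rule bexI[of _ "(p,q)"]) (auto simp: divide_simps)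

lemma fold_inv:
  assumes "s > 1"
  shows "E0 \<subseteq> foldl (process_pair s) E0 L \<and> foldl (process_pair s) E0 L \<subseteq> E0 \<union> set L \<and>
     (\<forall>pq\<in>set L. covered s (foldl (process_pair s) E0 L) (fst pq) (snd pq))"
proof (induction L arbitrary: E0)
  case Nil
  then show ?case by simp
next
  case (Cons pq L)
  let ?E1 = "process_pair s E0 pq"
  have h1: "E0 \<subseteq> ?E1" "?E1 \<subseteq> insert pq E0" "covered s ?E1 (fst pq) (snd pq)"
    using covered_self[OF assms, of "fst pq" "snd pq" E0]
    by (auto simp: process_pair_def)
  from Cons.IH[of ?E1] h1 show ?case
    by (auto intro: covered_mono)
qed

theorem theorem5:
  fixes P :: "'a::euclidean_space set" and s :: real and ord_list :: "('a \<times> 'a) list"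
  assumes "finite P" and "card P \<ge> 2" and "s > 1"
    and "distinct ord_list"
    and "set ord_list = {(p, q). p \<in> P \<and> q \<in> P \<and> p \<noteq> q}"
  shows "\<forall>p\<in>P. \<forall>q\<in>P. (\<exists>xs. is_path (uncoord_graph s ord_list) xs p q) \<and>
           graph_dist (uncoord_graph s ord_list) p q \<le> (s + 1) / (s - 1) * dist p q"
proof -
  define E where "E = uncoord_graph s ord_list"
  define t where "t = (s + 1) / (s - 1)"
  have t1: "t * (s - 1) = s + 1" using assms(3) by (simp add: t_def)
  have tpos: "t > 0" using assms(3) by (simp add: t_def)
  have inv: "E \<subseteq> set ord_list" "\<forall>pq\<in>set ord_list. covered s E (fst pq) (snd pq)"
    using fold_inv[OF assms(3), of "{}" ord_list] by (auto simp: E_def uncoord_graph_def)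
  have cov: "\<exists>a b. a \<in> P \<and> b \<in> P \<and> adjacent E a b \<and> dist p a \<le> dist a b / (2 * s + 2)
       \<and> dist q b \<le> dist a b / (2 * s + 2)" if "p \<in> P" "q \<in> P" "p \<noteq> q" for p q
  proof -
    have "covered s E p q" using inv(2) assms(5) that by force
    then obtain a b where ab: "(a,b) \<in> E" and
      c: "(dist p a \<le> dist a b / (2 * s + 2) \<and> dist q b \<le> dist a b / (2 * s + 2)) \<or>
        (dist p b \<le> dist a b / (2 * s + 2) \<and> dist q a \<le> dist a b / (2 * s + 2))"
      unfolding covered_def by auto
    have "a \<in> P" "b \<in> P" using ab inv(1) assms(5) by auto
    then show ?thesis using c ab
      by (metis adjacent_def dist_commute)
  qed
  define S where "S (p::'a) (q::'a) = {(x,y). x \<in> P \<and> y \<in> P \<and> dist x y < dist p q}" for p q :: 'a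
  have finS: "finite (S p q)" for p q
    by (rule finite_subset[of _ "P \<times> P"]) (auto simp: S_def assms(1))
  have main: "\<forall>p q. p \<in> P \<longrightarrow> q \<in> P \<longrightarrow> card (S p q) = n \<longrightarrow>
      (\<exists>xs. is_path E xs p q \<and> path_length xs \<le> t * dist p q)" for n
  proof (induction n rule: less_induct)
    case (less n)
    show ?case
    proof (intro allI impI)
      fix p q assume pP: "p \<in> P" and qP: "q \<in> P" and cn: "card (S p q) = n"
      show "\<exists>xs. is_path E xs p q \<and> path_length xs \<le> t * dist p q"
      proof (cases "p = q")
        case True
        then show ?thesis by (intro exI[of _ "[p]"]) (simp add: ip_single pl_single)
      next
        case False
        define D where "D = dist p q"
        have Dpos: "D > 0" using False by (simp add: D_def)
        obtain a b where aP: "a \<in> P" and bP: "b \<in> P" and adj: "adjacent E a b"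
          and pa: "dist p a \<le> dist a b / (2 * s + 2)" and qb: "dist q b \<le> dist a b / (2 * s + 2)"
          using cov[OF pP qP False] by blast
        define c where "c = dist a b"
        define r where "r = c / (2 * s + 2)"
        have cr: "c = 2 * r * (s+1)" using assms(3) by (simp add: r_def field_simps)
        have pa': "dist p a \<le> r" and qb': "dist b q \<le> r"
          using pa qb by (simp_all add: r_def c_def dist_commute)
        have "c \<le> dist a p + dist p q + dist q b"
          unfolding c_def using dist_triangle[of a b p] dist_triangle[of p b q] by linarith
        then have cle: "c \<le> D + 2 * r" using pa' qb' by (simp add: D_def dist_commute)
        have rle: "r * (2 * s) \<le> D" using cle cr by (simp add: algebra_simps)
        have rlt: "r < D"
        proof -
          have "r \<ge> 0" using pa' zero_le_dist order_trans by blast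
          show ?thesis
          proof (cases "r = 0")
            case True then show ?thesis using Dpos by simp
          next
            case False
            then have "r > 0" using \<open>r \<ge> 0\<close> by simp
            then have "r * 1 < r * (2 * s)" using assms(3) by (intro mult_strict_left_mono) auto
            then show ?thesis using rle by simp
          qed
        qed
        have sub: "S x y \<subset> S p q" if "x \<in> P" "y \<in> P" "dist x y < dist p q" for x y
        proof
          show "S x y \<subseteq> S p q" using that unfolding S_def by auto
          have "(x,y) \<in> S p q" "(x,y) \<notin> S x y" using that unfolding S_def by auto
          then show "S x y \<noteq> S p q" by blast
        qed
        have IH1: "\<exists>xs. is_path E xs p a \<and> path_length xs \<le> t * dist p a"
        proof -
          have "S p a \<subset> S p q" using sub[OF pP aP] pa' rlt D_def by linarith
          then have "card (S p a) < n" using cn finS psubset_card_mono by metis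
          then show ?thesis using less.IH pP aP by blast
        qed
        have IH2: "\<exists>xs. is_path E xs b q \<and> path_length xs \<le> t * dist b q"
        proof -
          have "S b q \<subset> S p q" using sub[OF bP qP] qb' rlt D_def by linarith
          then have "card (S b q) < n" using cn finS psubset_card_mono by metis
          then show ?thesis using less.IH bP qP by blast
        qed
        obtain xs where xs: "is_path E xs p a" "path_length xs \<le> t * dist p a" using IH1 by blast
        obtain ys where ys: "is_path E ys b q" "path_length ys \<le> t * dist b q" using IH2 by blast
        have ne: "xs \<noteq> []" "ys \<noteq> []" using xs ys by (auto simp: is_path_def)
        have lh: "last xs = a" "hd ys = b" using xs ys by (auto simp: is_path_def)
        have path: "is_path E (xs @ ys) p q" using ip_append[OF ne(1) xs(1) adj ys(1)] .
        have "path_length (xs @ ys) = path_length xs + c + path_length ys"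
          using pl_append[OF ne] lh c_def by simp
        also have "\<dots> \<le> t * r + c + t * r"
          using xs(2) ys(2) mult_left_mono[OF pa' less_imp_le[OF tpos]] mult_left_mono[OF qb' less_imp_le[OF tpos]] by linarith
        also have "\<dots> \<le> t * D"
        proof -
          have e: "t * r * (s - 1) = r * (s+1)" using t1
            by (metis mult.assoc mult.commute)
          have "(t * r + c + t * r) * (s - 1) = 2 * r * (s+1) + c * (s - 1)"
            using e by (simp add: algebra_simps)
          also have "\<dots> = c * s" using cr by (simp add: algebra_simps)
          also have "\<dots> \<le> D * (s + 1)"
          proof -
            have "c * (s+1) \<le> (D + 2 * r) * (s+1)" using cle assms(3) by (intro mult_right_mono) auto
            then show ?thesis using cr by (simp add: algebra_simps)
          qed
          also have "\<dots> = t * D * (s - 1)" using t1 by (metis mult.assoc mult.commute)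
          finally show ?thesis using assms(3) by simp
        qed
        finally show ?thesis using path D_def by blast
      qed
    qed
  qed
  show ?thesis
  proof (intro ballI conjI)
    fix p q assume pP: "p \<in> P" and qP: "q \<in> P"
    obtain xs where xs: "is_path E xs p q" "path_length xs \<le> t * dist p q"
      using main pP qP by blast
    show "\<exists>xs. is_path (uncoord_graph s ord_list) xs p q" using xs E_def by blast
    have "graph_dist E p q \<le> path_length xs"
      unfolding graph_dist_def
      by (rule cInf_lower) (use xs in \<open>auto intro: bdd_belowI[of _ 0] simp: pl_nonneg\<close>)
    then show "graph_dist (uncoord_graph s ord_list) p q \<le> (s + 1) / (s - 1) * dist p q"
      using xs E_def t_def by simp
  qed
qed

end
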